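(* Let $\mu$ be a probability measure supported on a symmetric convex domain $\Omega\subset\mathbb R^n$ with $\int_\Omega|x|\,d\mu(x)<+\infty$. Suppose that for some $\kappa>0$, $$\mathrm{Ent}_\mu(f)\le\frac1\kappa\int_\Omega\Phi_f\,d\mu\quad\text{for all }f\in\mathrm{QC}^1(\Omega,\mu).$$ Then $\mu$ satisfies the dilation inequality for $\mathcal K_s^n(\Omega)$ with constant $\kappa$.
   Context: Symmetric set: $K=-K$; symmetric function: $f(x)=f(-x)$; quasi-convex: $\{f<\lambda\}$ convex for all $\lambda$. Symmetric convex domain: nonempty open convex $\Omega=-\Omega\subset\mathbb R^n$. $\mathcal K_s^n(\Omega)$: nonempty symmetric open convex subsets of $\Omega$. For Borel $A$, $\varepsilon\in(0,1)$: $A_\varepsilon:=A\cup\{x:\exists y,\ \int_0^1\mathbf 1_A((1-t)x+ty)\,dt>1-\varepsilon\}$; $\mu^*(A):=\liminf_{\varepsilon\downarrow0}(\mu(A_\varepsilon)-\mu(A))/\varepsilon$. Dilation inequality with $\kappa$: $\mu^*(K)\ge-\kappa(1-\mu(K))\log(1-\mu(K))$ for all $K\in\mathcal K_s^n(\Omega)$. $\mathrm{Ent}_\mu(f):=\int f\log f\,d\mu-\int f\,d\mu\log\int f\,d\mu$. $\Phi_f(x):=\limsup_{\varepsilon\downarrow0}\frac{f(x)-f(\frac{1-\varepsilon}{1+\varepsilon}x)}{\varepsilon}$. $\mathrm{QC}(\Omega,\mu)$: all nonnegative, continuous, symmetric quasi-convex $f$ on $\Omega$ for which there exist a nonnegative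 Borel $g\in L^1(\mu)$ and $\varepsilon_0\in(0,1]$ with $\sup_{\varepsilon\in(0,\varepsilon_0)}\frac{f(x)-f(\frac{1-\varepsilon}{1+\varepsilon}x)}{\varepsilon}\le g(x)$ for all $x\in\Omega$. $\mathrm{QC}^p(\Omega,\mu):=\{f:f^p\in\mathrm{QC}(\Omega,\mu)\cap L^1(\mu)\}$. *)

theory Defs
  imports "HOL-Probability.Probability"
begin

definition sym_convex_domain :: "'a::euclidean_space set \<Rightarrow> bool" where
  "sym_convex_domain \<Omega> \<longleftrightarrow> \<Omega> \<noteq> {} \<and> open \<Omega> \<and> convex \<Omega> \<and> uminus ` \<Omega> = \<Omega>"

definition Ks :: "'a::euclidean_space set \<Rightarrow> 'a set set" where
  "Ks \<Omega> = {K. K \<noteq> {} \<and> K \<subseteq> \<Omega> \<and> open K \<and> convex K \<and> uminus ` K = K}"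

definition dilate :: "'a::euclidean_space set \<Rightarrow> real \<Rightarrow> 'a set" where
  "dilate A \<epsilon> = A \<union> {x. \<exists>y. (LINT t:{0..1}|lborel. indicator A ((1 - t) *\<^sub>R x + t *\<^sub>R y)) > 1 - \<epsilon>}"

definition mu_star :: "'a::euclidean_space measure \<Rightarrow> 'a set \<Rightarrow> ereal" where
  "mu_star \<mu> A = Liminf (at_right 0) (\<lambda>\<epsilon>. ereal ((measure \<mu> (dilate A \<epsilon>) - measure \<mu> A) / \<epsilon>))"

text \<open>s log s with the convention 0 log 0 = 0 (only used for s >= 0).\<close>
definition xlogx :: "real \<Rightarrow> real" where
  "xlogx s = (if s \<le> 0 then 0 else s * ln s)"

definition dilation_ineq :: "'a::euclidean_space measure \<Rightarrow> 'a set \<Rightarrow> real \<Rightarrow> bool" where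
  "dilation_ineq \<mu> \<Omega> \<kappa> \<longleftrightarrow>
     (\<forall>K \<in> Ks \<Omega>. mu_star \<mu> K \<ge> ereal (- \<kappa> * xlogx (1 - measure \<mu> K)))"

definition Ent :: "'a::euclidean_space measure \<Rightarrow> 'a set \<Rightarrow> ('a \<Rightarrow> real) \<Rightarrow> ereal" where
  "Ent \<mu> \<Omega> f =
     enn2ereal (\<integral>\<^sup>+x\<in>\<Omega>. ennreal (xlogx (f x)) \<partial>\<mu>)
     - enn2ereal (\<integral>\<^sup>+x\<in>\<Omega>. ennreal (- xlogx (f x)) \<partial>\<mu>)
     - ereal (xlogx (LINT x:\<Omega>|\<mu>. f x))"

definition Phi :: "('a::euclidean_space \<Rightarrow> real) \<Rightarrow> 'a \<Rightarrow> ereal" where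
  "Phi f x = Limsup (at_right 0) (\<lambda>\<epsilon>. ereal ((f x - f (((1 - \<epsilon>) / (1 + \<epsilon>)) *\<^sub>R x)) / \<epsilon>))"

definition QC :: "'a::euclidean_space set \<Rightarrow> 'a measure \<Rightarrow> ('a \<Rightarrow> real) set" where
  "QC \<Omega> \<mu> = {f. (\<forall>x\<in>\<Omega>. f x \<ge> 0) \<and> continuous_on \<Omega> f \<and> (\<forall>x\<in>\<Omega>. f (- x) = f x)
      \<and> (\<forall>l. convex {x\<in>\<Omega>. f x < l})
      \<and> (\<exists>g \<epsilon>0. g \<in> borel_measurable borel \<and> (\<forall>x. g x \<ge> 0) \<and> integrable \<mu> g
            \<and> 0 < \<epsilon>0 \<and> \<epsilon>0 \<le> 1
            \<and> (\<forall>x\<in>\<Omega>. \<forall>\<epsilon>\<in>{0<..<\<epsilon>0}. (f x - f (((1 - \<epsilon>) / (1 + \<epsilon>)) *\<^sub>R x)) / \<epsilon> \<le> g x))}"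

definition QC1 :: "'a::euclidean_space set \<Rightarrow> 'a measure \<Rightarrow> ('a \<Rightarrow> real) set" where
  "QC1 \<Omega> \<mu> = {f. f \<in> QC \<Omega> \<mu> \<and> set_integrable \<mu> \<Omega> f}"

end

theory Submission
  imports Defs
begin


locale symK =
  fixes K :: "'a::euclidean_space set" and r :: real
  assumes openK: "open K" and convK: "convex K" and symK: "\<And>x. x \<in> K \<Longrightarrow> -x \<in> K"
    and rpos: "r > 0" and ballK: "ball 0 r \<subseteq> K"
begin

lemma zeroK: "0 \<in> K" using ballK rpos by auto

definition gau :: "'a \<Rightarrow> real" where
  "gau x = Inf {t. 0 < t \<and> x /\<^sub>R t \<in> K}"

lemma up_closed:
  assumes "0 < t" "x /\<^sub>R t \<in> K" "t \<le> t'"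
  shows "x /\<^sub>R t' \<in> K"
proof -
  have c: "(t / t') * inverse t = inverse t'" using assms by (simp add: field_simps)
  have "x /\<^sub>R t' = (t / t') *\<^sub>R (x /\<^sub>R t) + (1 - t/t') *\<^sub>R 0" by (simp only: scaleR_scaleR c scaleR_zero_right add_0_right)
  moreover have "(t / t') *\<^sub>R (x /\<^sub>R t) + (1 - t/t') *\<^sub>R 0 \<in> K"
    by (rule convexD[OF convK assms(2) zeroK]) (use assms in auto)
  ultimately show ?thesis by (simp only:)
qed

lemma big_in:
  assumes "t > norm x / r"
  shows "x /\<^sub>R t \<in> K"
proof -
  have "norm x / r \<ge> 0" using rpos by simp
  hence tp: "t > 0" using assms by linarith
  have "norm (x /\<^sub>R t) = norm x / t" using tp by (simp add: field_simps)
  also have "\<dots> < r" using assms tp rpos by (simp add: field_simps)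
  finally show ?thesis using ballK by auto
qed

lemma open_down:
  assumes "0 < t" "x /\<^sub>R t \<in> K"
  shows "\<exists>t'. 0 < t' \<and> t' < t \<and> x /\<^sub>R t' \<in> K"
proof -
  obtain e where e: "e > 0" "ball (x /\<^sub>R t) e \<subseteq> K" using openK assms(2) open_contains_ball by blast
  define \<eta> where "\<eta> = e * t / (2 * (norm x + 1))"
  have "2 * (norm x + 1) > 0" using norm_ge_zero[of x] by argo
  hence \<eta>: "\<eta> > 0" using e assms unfolding \<eta>_def by (intro divide_pos_pos mult_pos_pos) auto
  define t' where "t' = t / (1 + \<eta>)"
  have "x /\<^sub>R t' = ((1 + \<eta>) / t) *\<^sub>R x" using \<eta> assms by (simp add: t'_def)
  hence "x /\<^sub>R t - x /\<^sub>R t' = (inverse t - (1 + \<eta>) / t) *\<^sub>R x" by (simp only: scaleR_diff_left)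
  also have "inverse t - (1 + \<eta>) / t = - (\<eta> / t)" using assms by (simp add: field_simps)
  finally have "dist (x /\<^sub>R t) (x /\<^sub>R t') = norm ((- (\<eta> / t)) *\<^sub>R x)" by (simp only: dist_norm)
  also have "\<dots> = \<eta> * norm x / t" using \<eta> assms by simp
  also have "\<dots> = e * norm x / (2 * (norm x + 1))" using assms by (simp add: \<eta>_def)
  also have "\<dots> < e"
  proof -
    have "norm x < 2 * (norm x + 1)" using norm_ge_zero[of x] by argo
    hence "e * norm x < e * (2 * (norm x + 1))" using e(1) by (rule mult_strict_left_mono)
    thus ?thesis using \<open>2 * (norm x + 1) > 0\<close> by (simp add: pos_divide_less_eq mult.commute)
  qed
  finally have "x /\<^sub>R t' \<in> K" using e by auto
  moreover have "0 < t'" "t' < t" using \<eta> assms by (auto simp: t'_def field_simps)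
  ultimately show ?thesis by blast
qed

lemma gau_lt: assumes "0 < t" shows "x /\<^sub>R t \<in> K \<longleftrightarrow> gau x < t"
proof -
  let ?S = "{t. 0 < t \<and> x /\<^sub>R t \<in> K}"
  have "norm x / r \<ge> 0" using rpos by simp
  hence ne: "?S \<noteq> {}" using big_in[of x "norm x / r + 1"]
    by (intro ex_in_conv[THEN iffD1] exI[of _ "norm x / r + 1"]) auto
  have bdd: "bdd_below ?S" by (auto intro: bdd_belowI[of _ 0])
  show ?thesis
  proof
    assume "x /\<^sub>R t \<in> K"
    then obtain t' where "0 < t'" "t' < t" "x /\<^sub>R t' \<in> K" using open_down assms by blast
    hence "gau x \<le> t'" unfolding gau_def by (intro cInf_lower bdd) auto
    thus "gau x < t" using \<open>t' < t\<close> by simp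
  next
    assume "gau x < t"
    then obtain s where "s \<in> ?S" "s < t" using cInf_less_iff[OF ne bdd] unfolding gau_def by blast
    thus "x /\<^sub>R t \<in> K" using up_closed[of s x t] by auto
  qed
qed

lemma gau_nonneg: "gau x \<ge> 0"
proof (rule ccontr)
  assume "\<not> gau x \<ge> 0"
  hence "gau x < 0" by simp
  have "norm x / r \<ge> 0" using rpos by simp
  hence ne: "{t. 0 < t \<and> x /\<^sub>R t \<in> K} \<noteq> {}" using big_in[of x "norm x / r + 1"]
    by (intro ex_in_conv[THEN iffD1] exI[of _ "norm x / r + 1"]) auto
  have "0 \<le> gau x" unfolding gau_def by (rule cInf_greatest[OF ne]) auto
  thus False using \<open>gau x < 0\<close> by simp
qed

lemma eq_by_lt:
  fixes a b :: real assumes "a \<ge> 0" "b \<ge> 0" "\<And>t. 0 < t \<Longrightarrow> a < t \<longleftrightarrow> b < t"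
  shows "a = b"
proof (rule ccontr)
  assume "a \<noteq> b"
  then consider "a < b" | "b < a" by linarith
  thus False
  proof cases
    case 1 then show ?thesis using assms(3)[of "(a+b)/2"] assms(1,2) by auto
  next
    case 2 then show ?thesis using assms(3)[of "(a+b)/2"] assms(1,2) by auto
  qed
qed

lemma inK_iff: "x \<in> K \<longleftrightarrow> gau x < 1" using gau_lt[of 1 x] by simp

lemma gau_scale_pos: assumes "c > 0" shows "gau (c *\<^sub>R x) = c * gau x"
proof (rule eq_by_lt)
  show "0 \<le> gau (c *\<^sub>R x)" "0 \<le> c * gau x" using assms gau_nonneg by auto
  fix t :: real assume t: "0 < t"
  have e1: "(c *\<^sub>R x) /\<^sub>R t = x /\<^sub>R (t / c)" using assms by (simp add: scaleR_scaleR inverse_eq_divide)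
  have "gau (c *\<^sub>R x) < t \<longleftrightarrow> x /\<^sub>R (t / c) \<in> K" using gau_lt[OF t, of "c *\<^sub>R x"] unfolding e1 by blast
  also have "x /\<^sub>R (t / c) \<in> K \<longleftrightarrow> gau x < t / c" using gau_lt[of "t/c" x] t assms by simp
  also have "\<dots> \<longleftrightarrow> c * gau x < t" using assms by (simp add: field_simps)
  finally show "gau (c *\<^sub>R x) < t \<longleftrightarrow> c * gau x < t" .
qed

lemma gau_zero: "gau 0 = 0"
proof (rule eq_by_lt[OF gau_nonneg order_refl])
  fix t :: real assume "0 < t"
  thus "gau 0 < t \<longleftrightarrow> 0 < t" using gau_lt[of t 0] zeroK by simp
qed

lemma gau_uminus: "gau (- x) = gau x"
proof (rule eq_by_lt[OF gau_nonneg gau_nonneg])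
  fix t :: real assume t: "0 < t"
  have "(- x) /\<^sub>R t \<in> K \<longleftrightarrow> x /\<^sub>R t \<in> K" using symK[of "x /\<^sub>R t"] symK[of "(-x) /\<^sub>R t"] by auto
  thus "gau (- x) < t \<longleftrightarrow> gau x < t" using gau_lt[OF t, of x] gau_lt[OF t, of "-x"] by blast
qed

lemma gau_scale: "gau (c *\<^sub>R x) = \<bar>c\<bar> * gau x"
proof -
  consider "c > 0" | "c = 0" | "c < 0" by linarith
  thus ?thesis
  proof cases
    case 3
    have "gau (c *\<^sub>R x) = (-c) * gau (-x)" using gau_scale_pos[of "-c" "-x"] 3 by simp
    thus ?thesis using 3 gau_uminus by simp
  qed (auto simp: gau_scale_pos gau_zero)
qed

lemma gau_add: "gau (x + y) \<le> gau x + gau y"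
proof (rule ccontr)
  assume "\<not> ?thesis"
  hence lt: "gau x + gau y < gau (x + y)" by simp
  define d where "d = (gau (x + y) - gau x - gau y) / 2"
  have d: "d > 0" using lt by (simp add: d_def)
  define a where "a = gau x + d/2" define b where "b = gau y + d/2"
  have a: "a > 0" "x /\<^sub>R a \<in> K" using gau_nonneg[of x] d gau_lt[of a x] by (auto simp: a_def)
  have b: "b > 0" "y /\<^sub>R b \<in> K" using gau_nonneg[of y] d gau_lt[of b y] by (auto simp: b_def)
  have c1: "a/(a+b) * inverse a = inverse (a+b)" using a b by (simp add: field_simps)
  have c2: "b/(a+b) * inverse b = inverse (a+b)" using a b by (simp add: field_simps)
  have "(x + y) /\<^sub>R (a + b) = (a / (a+b)) *\<^sub>R (x /\<^sub>R a) + (b / (a+b)) *\<^sub>R (y /\<^sub>R b)"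
    by (simp only: scaleR_scaleR c1 c2 scaleR_add_right)
  moreover have "\<dots> \<in> K" by (rule convexD[OF convK a(2) b(2)]) (use a b in \<open>auto simp: add_divide_distrib[symmetric]\<close>)
  ultimately have "gau (x + y) < a + b" using gau_lt[of "a+b" "x+y"] add_pos_pos[OF a(1) b(1)] by (simp only:)
  thus False using d unfolding a_def b_def d_def by argo
qed

lemma gau_le_norm: "gau x \<le> norm x / r"
proof (rule ccontr)
  assume "\<not> ?thesis"
  hence "norm x / r < gau x" by simp
  obtain a where a: "a = norm x / r" by blast
  define t where "t = (a + gau x)/2"
  have "t > norm x / r" using \<open>norm x / r < gau x\<close> unfolding t_def a[symmetric] by argo
  have "t < gau x" using \<open>norm x / r < gau x\<close> unfolding t_def a[symmetric] by argo
  have "x /\<^sub>R t \<in> K" using big_in \<open>t > norm x / r\<close> by blast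
  moreover have "norm x / r \<ge> 0" using rpos by simp
  hence "t > 0" using \<open>t > norm x / r\<close> by linarith
  ultimately have "gau x < t" using gau_lt by blast
  thus False using \<open>t < gau x\<close> by simp
qed

lemma gau_lip: "\<bar>gau x - gau y\<bar> \<le> norm (x - y) / r"
proof -
  have "gau x \<le> gau y + gau (x - y)" using gau_add[of y "x - y"] by simp
  moreover have "gau y \<le> gau x + gau (y - x)" using gau_add[of x "y - x"] by simp
  moreover have "gau (y - x) = gau (x - y)" using gau_uminus[of "x - y"] by simp
  ultimately show ?thesis using gau_le_norm[of "x - y"] by linarith
qed

lemma gau_cont: "continuous_on UNIV gau"
proof (rule continuous_on_iff[THEN iffD2], intro ballI allI impI)
  fix x and e :: real assume "e > 0"
  have "\<forall>x'. dist x' x < e * r \<longrightarrow> dist (gau x') (gau x) < e"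
  proof (intro allI impI)
    fix x' assume "dist x' x < e * r"
    hence "norm (x' - x) / r < e" using rpos by (simp add: dist_norm pos_divide_less_eq)
    moreover have "dist (gau x') (gau x) \<le> norm (x' - x) / r" using gau_lip[of x' x] by (simp add: dist_real_def)
    ultimately show "dist (gau x') (gau x) < e" by argo
  qed
  thus "\<exists>d>0. \<forall>x'\<in>UNIV. dist x' x < d \<longrightarrow> dist (gau x') (gau x) < e"
    using rpos \<open>e > 0\<close> by (intro exI[of _ "e * r"]) auto
qed

lemma gau_meas[measurable]: "gau \<in> borel_measurable borel"
  using gau_cont by (simp add: borel_measurable_continuous_onI)

lemma gau_convex_max: assumes "0 \<le> u" "u \<le> 1"
  shows "gau (u *\<^sub>R x + (1 - u) *\<^sub>R y) \<le> max (gau x) (gau y)"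
proof -
  have "gau (u *\<^sub>R x + (1 - u) *\<^sub>R y) \<le> u * gau x + (1-u) * gau y"
    using gau_add[of "u *\<^sub>R x" "(1 - u) *\<^sub>R y"] gau_scale assms by simp
  also have "\<dots> \<le> u * max (gau x) (gau y) + (1-u) * max (gau x) (gau y)"
    using assms by (intro add_mono mult_left_mono) auto
  finally show ?thesis by (simp add: algebra_simps)
qed

end


lemma seg_int:
  fixes K :: "'a::euclidean_space set"
  shows "(LINT t:{0..1}|lborel. indicator K ((1 - t) *\<^sub>R x + t *\<^sub>R y))
       = measure lborel {t\<in>{0..1}. (1 - t) *\<^sub>R x + t *\<^sub>R y \<in> K}"
proof -
  have "(LINT t:{0..1}|lborel. indicator K ((1 - t) *\<^sub>R x + t *\<^sub>R y))
      = integral\<^sup>L lborel (indicator {t\<in>{0..1}. (1 - t) *\<^sub>R x + t *\<^sub>R y \<in> K})"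
    unfolding set_lebesgue_integral_def
    by (intro Bochner_Integration.integral_cong) (auto split: split_indicator)
  also have "\<dots> = measure lborel {t\<in>{0..1}. (1 - t) *\<^sub>R x + t *\<^sub>R y \<in> K}" by simp
  finally show ?thesis .
qed


lemma sub01_fmeas:
  assumes "A \<in> sets lborel" "A \<subseteq> {0..(1::real)}"
  shows "A \<in> fmeasurable lborel"
proof -
  have "emeasure lborel A \<le> emeasure lborel {0..(1::real)}" by (rule emeasure_mono[OF assms(2)]) simp
  thus ?thesis using assms(1) by (auto simp: fmeasurable_def top.not_eq_extremum intro: le_less_trans)
qed

context symK
begin

lemma open_lt_set: "{t::real. gau ((1 - t) *\<^sub>R x + t *\<^sub>R y) < c} \<in> sets lborel"
proof -
  have "open ((\<lambda>t::real. gau ((1 - t) *\<^sub>R x + t *\<^sub>R y)) -` {..<c})"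
    by (rule open_vimage) (auto intro!: continuous_on_compose2[OF gau_cont] continuous_intros)
  thus ?thesis by (simp add: vimage_def)
qed

lemma Tset_meas: "{t\<in>{0..1::real}. gau ((1 - t) *\<^sub>R x + t *\<^sub>R y) < c} \<in> sets lborel"
proof -
  have "{t\<in>{0..1::real}. gau ((1 - t) *\<^sub>R x + t *\<^sub>R y) < c} = {0..1} \<inter> {t::real. gau ((1 - t) *\<^sub>R x + t *\<^sub>R y) < c}" by auto
  thus ?thesis using open_lt_set by simp
qed

definition F :: "'a \<Rightarrow> 'a \<Rightarrow> real" where
  "F x y = measure lborel {t\<in>{0..1::real}. gau ((1 - t) *\<^sub>R x + t *\<^sub>R y) < 1}"

lemma F_eq: "(LINT t:{0..1}|lborel. indicator K ((1 - t) *\<^sub>R x + t *\<^sub>R y)) = F x y"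
  unfolding seg_int F_def inK_iff ..

lemma D_open: "open {x. \<exists>y. F x y > c}"
  unfolding open_dist
proof (intro ballI)
  fix x assume "x \<in> {x. \<exists>y. F x y > c}"
  then obtain y where y: "F x y > c" by auto
  define S where "S n = {t\<in>{0..1::real}. gau ((1 - t) *\<^sub>R x + t *\<^sub>R y) < 1 - 1 / real (Suc n)}" for n
  have Smeas: "range S \<subseteq> sets lborel" unfolding S_def using Tset_meas by auto
  have inc: "incseq S"
  proof (rule incseq_SucI)
    fix n
    have "1 / real (Suc (Suc n)) \<le> 1 / real (Suc n)" by (intro divide_left_mono) auto
    thus "S n \<subseteq> S (Suc n)" unfolding S_def by auto
  qed
  have U: "(\<Union>n. S n) = {t\<in>{0..1::real}. gau ((1 - t) *\<^sub>R x + t *\<^sub>R y) < 1}"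
  proof
    show "(\<Union>n. S n) \<subseteq> {t\<in>{0..1::real}. gau ((1 - t) *\<^sub>R x + t *\<^sub>R y) < 1}"
    proof
      fix t assume "t \<in> (\<Union>n. S n)"
      then obtain n where "t \<in> S n" by auto
      hence t: "0 \<le> t" "t \<le> 1" "gau ((1 - t) *\<^sub>R x + t *\<^sub>R y) < 1 - 1 / real (Suc n)" unfolding S_def by auto
      have "0 \<le> 1 / real (Suc n)" by simp
      hence "gau ((1 - t) *\<^sub>R x + t *\<^sub>R y) < 1" using t(3) by argo
      thus "t \<in> {t\<in>{0..1::real}. gau ((1 - t) *\<^sub>R x + t *\<^sub>R y) < 1}" using t by auto
    qed
  next
    show "{t\<in>{0..1::real}. gau ((1 - t) *\<^sub>R x + t *\<^sub>R y) < 1} \<subseteq> (\<Union>n. S n)"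
    proof
      fix t assume t: "t \<in> {t\<in>{0..1::real}. gau ((1 - t) *\<^sub>R x + t *\<^sub>R y) < 1}"
      then obtain n where "inverse (real (Suc n)) < 1 - gau ((1 - t) *\<^sub>R x + t *\<^sub>R y)"
        using reals_Archimedean[of "1 - gau ((1 - t) *\<^sub>R x + t *\<^sub>R y)"] by auto
      hence "t \<in> S n" using t unfolding S_def by (auto simp: inverse_eq_divide)
      thus "t \<in> (\<Union>n. S n)" by blast
    qed
  qed
  have "{t\<in>{0..1::real}. gau ((1 - t) *\<^sub>R x + t *\<^sub>R y) < 1} \<in> fmeasurable lborel"
    by (rule sub01_fmeas[OF Tset_meas]) auto
  hence fin: "emeasure lborel (\<Union>n. S n) \<noteq> \<infinity>"
    unfolding U by (auto simp: fmeasurable_def)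
  have "(\<lambda>n. measure lborel (S n)) \<longlonglongrightarrow> F x y"
    using Lim_measure_incseq[OF Smeas inc fin] unfolding U F_def .
  from order_tendstoD(1)[OF this y] obtain n where n: "measure lborel (S n) > c"
    unfolding eventually_sequentially by auto
  show "\<exists>e>0. \<forall>x'. dist x' x < e \<longrightarrow> x' \<in> {x. \<exists>y. F x y > c}"
  proof (intro exI[of _ "r / real (Suc n)"] conjI allI impI)
    show "r / real (Suc n) > 0" using rpos by simp
  next
    fix x' assume d: "dist x' x < r / real (Suc n)"
    have sub: "S n \<subseteq> {t\<in>{0..1::real}. gau ((1 - t) *\<^sub>R x' + t *\<^sub>R y) < 1}"
    proof
      fix t assume "t \<in> S n"
      hence t: "0 \<le> t" "t \<le> 1" "gau ((1 - t) *\<^sub>R x + t *\<^sub>R y) < 1 - 1 / real (Suc n)"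
        unfolding S_def by auto
      have e: "(1 - t) *\<^sub>R x' + t *\<^sub>R y = ((1 - t) *\<^sub>R x + t *\<^sub>R y) + (1 - t) *\<^sub>R (x' - x)"
        by (simp add: algebra_simps)
      have "gau ((1 - t) *\<^sub>R (x' - x)) = \<bar>1 - t\<bar> * gau (x' - x)" by (rule gau_scale)
      also have "\<dots> \<le> gau (x' - x)" using t gau_nonneg[of "x' - x"]
        by (intro mult_left_le_one_le) auto
      also have "\<dots> \<le> norm (x' - x) / r" by (rule gau_le_norm)
      also have "\<dots> < 1 / real (Suc n)"
        using d rpos by (simp add: dist_norm pos_divide_less_eq field_simps)
      finally have "gau ((1 - t) *\<^sub>R (x' - x)) < 1 / real (Suc n)" .
      hence "gau ((1 - t) *\<^sub>R x' + t *\<^sub>R y) < 1"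
        using gau_add[of "(1 - t) *\<^sub>R x + t *\<^sub>R y" "(1 - t) *\<^sub>R (x' - x)"] t(3) unfolding e by argo
      thus "t \<in> {t\<in>{0..1::real}. gau ((1 - t) *\<^sub>R x' + t *\<^sub>R y) < 1}" using t by auto
    qed
    have "measure lborel (S n) \<le> F x' y"
      unfolding F_def
    proof (rule measure_mono_fmeasurable[OF sub])
      show "S n \<in> sets lborel" using Smeas by auto
      show "{t\<in>{0..1::real}. gau ((1 - t) *\<^sub>R x' + t *\<^sub>R y) < 1} \<in> fmeasurable lborel"
        by (rule sub01_fmeas[OF Tset_meas]) auto
    qed
    hence "F x' y > c" using n by linarith
    thus "x' \<in> {x. \<exists>y. F x y > c}" by blast
  qed
qed

lemma dilate_eq: "dilate K \<epsilon> = K \<union> {x. \<exists>y. F x y > 1 - \<epsilon>}"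
  unfolding dilate_def F_eq ..

lemma dilate_open: "open (dilate K \<epsilon>)"
  unfolding dilate_eq using openK D_open by (rule open_Un)

lemma dilate_contains:
  assumes e: "0 < \<epsilon>" "\<epsilon> < 1" and x: "gau x \<le> 1 + 2 * \<epsilon>"
  shows "x \<in> dilate K \<epsilon>"
proof (cases "gau x < 1")
  case True thus ?thesis unfolding dilate_def using inK_iff by auto
next
  case False
  define R where "R = gau x"
  have R: "R \<ge> 1" "R \<le> 1 + 2 * \<epsilon>" using False x by (auto simp: R_def)
  define y where "y = (- (1 / R)) *\<^sub>R x"
  define a where "a = (R - 1) / (R + 1)"
  have a: "0 \<le> a" "a < 1" using R by (auto simp: a_def)
  have T: "{t\<in>{0..1::real}. gau ((1 - t) *\<^sub>R x + t *\<^sub>R y) < 1} = {a<..<1}"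
  proof (intro set_eqI iffI)
    fix t :: real
    have eq: "(1 - t) *\<^sub>R x + t *\<^sub>R y = ((1 - t) + t * (- (1 / R))) *\<^sub>R x"
      unfolding y_def by (simp only: scaleR_scaleR scaleR_add_left)
    have g: "gau ((1 - t) *\<^sub>R x + t *\<^sub>R y) = \<bar>R - t * (R + 1)\<bar>"
    proof -
      have "gau ((1 - t) *\<^sub>R x + t *\<^sub>R y) = \<bar>(1 - t) + t * (- (1 / R))\<bar> * R"
        unfolding eq gau_scale R_def ..
      also have "\<dots> = \<bar>((1 - t) + t * (- (1 / R))) * R\<bar>" using R by (simp add: abs_mult)
      also have "((1 - t) + t * (- (1 / R))) * R = R - t * (R + 1)" using R by (simp add: field_simps)
      finally show ?thesis .
    qed
    have Rp: "R + 1 > 0" using R by simp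
    have iff1: "a < t \<longleftrightarrow> R - 1 < t * (R + 1)" unfolding a_def using Rp by (simp add: pos_divide_less_eq)
    have iff2: "t < 1 \<longleftrightarrow> t * (R + 1) < R + 1" using Rp by simp
    { assume "t \<in> {t\<in>{0..1::real}. gau ((1 - t) *\<^sub>R x + t *\<^sub>R y) < 1}"
      hence "\<bar>R - t * (R + 1)\<bar> < 1" using g by simp
      thus "t \<in> {a<..<1}" using iff1 iff2 by auto }
    { assume "t \<in> {a<..<1}"
      hence "R - 1 < t * (R + 1)" "t * (R + 1) < R + 1" "0 \<le> t" "t \<le> 1" using iff1 iff2 a by auto
      thus "t \<in> {t\<in>{0..1::real}. gau ((1 - t) *\<^sub>R x + t *\<^sub>R y) < 1}" using g by auto }
  qed
  have "F x y = 1 - a" unfolding F_def T using a by simp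
  also have "1 - a = 2 / (R + 1)" unfolding a_def using R by (simp add: field_simps)
  also have "2 / (R + 1) > 1 - \<epsilon>"
  proof -
    have "(1 - \<epsilon>) * (R + 1) \<le> (1 - \<epsilon>) * (2 + 2 * \<epsilon>)" using R e by (intro mult_left_mono) auto
    also have "\<dots> < 2" using e by (simp add: algebra_simps)
    finally show ?thesis using R by (simp add: pos_less_divide_eq)
  qed
  finally show ?thesis unfolding dilate_eq by auto
qed

lemma dilate_sets: "dilate K \<epsilon> \<in> sets borel"
  using dilate_open by simp

lemma K_sub_dilate: "K \<subseteq> dilate K \<epsilon>" unfolding dilate_def by auto

end


definition hh :: "real \<Rightarrow> real \<Rightarrow> real" where
  "hh \<delta> u = min 1 (max 0 ((u - 1) / (2 * \<delta>)))"

lemma clamp_lip: "min 1 (max 0 (a::real)) - min 1 (max 0 b) \<le> \<bar>a - b\<bar>"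
  by (auto simp: min_def max_def)

lemma hh_range: "0 \<le> hh \<delta> u" "hh \<delta> u \<le> 1"
  unfolding hh_def by auto

lemma hh_mono: assumes "0 < \<delta>" "u \<le> v" shows "hh \<delta> u \<le> hh \<delta> v"
proof -
  have "(u - 1) / (2 * \<delta>) \<le> (v - 1) / (2 * \<delta>)" using assms by (intro divide_right_mono) auto
  thus ?thesis unfolding hh_def by (auto simp: min_def max_def)
qed

lemma hh_lip: assumes "0 < \<delta>" "v \<le> u" shows "hh \<delta> u - hh \<delta> v \<le> (u - v) / (2 * \<delta>)"
proof -
  have "hh \<delta> u - hh \<delta> v \<le> \<bar>(u - 1) / (2 * \<delta>) - (v - 1) / (2 * \<delta>)\<bar>"
    unfolding hh_def by (rule clamp_lip)
  also have "(u - 1) / (2 * \<delta>) - (v - 1) / (2 * \<delta>) = (u - v) / (2 * \<delta>)"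
    by (simp add: diff_divide_distrib)
  also have "\<bar>(u - v) / (2 * \<delta>)\<bar> = (u - v) / (2 * \<delta>)" using assms by simp
  finally show ?thesis .
qed

lemma hh_low: assumes "u \<le> 1" "0 < \<delta>" shows "hh \<delta> u = 0"
proof -
  have "(u - 1) / (2 * \<delta>) \<le> 0" using assms by (intro divide_nonpos_pos) auto
  thus ?thesis unfolding hh_def by (simp add: max_def)
qed

lemma hh_high: assumes "1 + 2 * \<delta> \<le> u" "0 < \<delta>" shows "hh \<delta> u = 1"
proof -
  have "1 \<le> (u - 1) / (2 * \<delta>)" using assms by (simp add: pos_le_divide_eq)
  thus ?thesis unfolding hh_def by (auto simp: min_def max_def)
qed

lemma hh_cont: "continuous_on UNIV (hh \<delta>)"
proof (cases "\<delta> = 0")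
  case True thus ?thesis unfolding hh_def by simp
next
  case False thus ?thesis unfolding hh_def by (intro continuous_intros) auto
qed

lemma xlogx_nonpos: "0 \<le> s \<Longrightarrow> s \<le> 1 \<Longrightarrow> xlogx s \<le> 0"
  unfolding xlogx_def by (auto intro: mult_nonneg_nonpos)

lemma xlogx_01: "xlogx 0 = 0" "xlogx 1 = 0" unfolding xlogx_def by auto

lemma neg_xlogx_le1: assumes "0 \<le> s" "s \<le> 1" shows "- xlogx s \<le> 1"
proof (cases "s = 0")
  case False
  hence s: "0 < s" using assms by simp
  have "ln (1 / s) \<le> 1 / s - 1" using s by (intro ln_le_minus_one) simp
  hence "- ln s \<le> 1 / s - 1" using s by (simp add: ln_div)
  hence "s * (- ln s) \<le> s * (1 / s - 1)" using s by (intro mult_left_mono) auto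
  also have "\<dots> = 1 - s" using s by (simp add: field_simps)
  finally show ?thesis using s assms unfolding xlogx_def by auto
qed (simp add: xlogx_def)

locale setting = symK K r for K :: "'a::euclidean_space set" and r +
  fixes \<mu> :: "'a measure" and \<Omega> :: "'a set" and \<kappa> :: real
  assumes P: "prob_space \<mu>" and S: "sets \<mu> = sets borel"
    and KO: "K \<subseteq> \<Omega>" and Oopen: "open \<Omega>" and Oconv: "convex \<Omega>"
    and O1: "measure \<mu> \<Omega> = 1" and intnorm: "integrable \<mu> norm" and kpos: "\<kappa> > 0"
begin

interpretation P: prob_space \<mu> by (rule P)

definition ff :: "real \<Rightarrow> 'a \<Rightarrow> real" where "ff \<delta> x = hh \<delta> (gau x)"

lemma ff_cont: "continuous_on UNIV (ff \<delta>)"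
  unfolding ff_def by (rule continuous_on_compose2[OF hh_cont gau_cont]) auto

lemma ff_meas[measurable]: "ff \<delta> \<in> borel_measurable borel"
  using ff_cont by (simp add: borel_measurable_continuous_onI)

lemma meas_mu: assumes "f \<in> borel_measurable borel" shows "f \<in> borel_measurable \<mu>"
  by (subst measurable_cong_sets[OF S refl]) (rule assms)

lemma sets_mu: "A \<in> sets borel \<Longrightarrow> A \<in> sets \<mu>" using S by simp

lemma quot_bound:
  assumes d: "0 < \<delta>" and e: "0 < \<epsilon>" "\<epsilon> < 1"
  shows "(ff \<delta> x - ff \<delta> (((1 - \<epsilon>) / (1 + \<epsilon>)) *\<^sub>R x)) / \<epsilon> \<le> gau x / \<delta>"
proof -
  define s where "s = (1 - \<epsilon>) / (1 + \<epsilon>)"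
  have s: "0 < s" "s \<le> 1" using e by (auto simp: s_def)
  have g: "gau (s *\<^sub>R x) = s * gau x" using s gau_scale by simp
  have le: "s * gau x \<le> gau x" using s gau_nonneg[of x] by (simp add: mult_left_le_one_le)
  have A: "ff \<delta> x - ff \<delta> (s *\<^sub>R x) \<le> (gau x - s * gau x) / (2 * \<delta>)"
    unfolding ff_def g by (rule hh_lip[OF d le])
  have B: "gau x - s * gau x = 2 * \<epsilon> / (1 + \<epsilon>) * gau x"
  proof -
    have "gau x - s * gau x = (1 - s) * gau x" by (simp add: algebra_simps)
    also have "1 - s = 2 * \<epsilon> / (1 + \<epsilon>)" using e by (simp add: s_def field_simps)
    finally show ?thesis .
  qed
  have "2 * \<epsilon> / (1 + \<epsilon>) \<le> 2 * \<epsilon>" using e by (simp add: divide_le_eq)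
  hence C: "2 * \<epsilon> / (1 + \<epsilon>) * gau x / (2 * \<delta>) \<le> 2 * \<epsilon> * gau x / (2 * \<delta>)"
    using d gau_nonneg[of x] by (intro divide_right_mono mult_right_mono) auto
  have E: "2 * \<epsilon> * gau x / (2 * \<delta>) = (gau x / \<delta>) * \<epsilon>" using d by (simp add: field_simps)
  have "ff \<delta> x - ff \<delta> (s *\<^sub>R x) \<le> (gau x / \<delta>) * \<epsilon>"
    using A C unfolding B E by (rule order_trans)
  thus ?thesis unfolding s_def[symmetric] using e by (simp add: pos_divide_le_eq)
qed

lemma ff_QC1: assumes d: "0 < \<delta>" shows "ff \<delta> \<in> QC1 \<Omega> \<mu>"
  unfolding QC1_def QC_def mem_Collect_eq
proof (intro conjI ballI allI)
  fix x show "0 \<le> ff \<delta> x" unfolding ff_def by (rule hh_range)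
next
  show "continuous_on \<Omega> (ff \<delta>)" using ff_cont by (rule continuous_on_subset) auto
next
  fix x show "ff \<delta> (- x) = ff \<delta> x" unfolding ff_def gau_uminus ..
next
  fix l :: real
  show "convex {x \<in> \<Omega>. ff \<delta> x < l}"
  proof (rule convexI)
    fix x y and u v :: real
    assume x: "x \<in> {x \<in> \<Omega>. ff \<delta> x < l}" and y: "y \<in> {x \<in> \<Omega>. ff \<delta> x < l}"
      and u: "0 \<le> u" "0 \<le> v" "u + v = 1"
    have v: "v = 1 - u" using u by simp
    have inO: "u *\<^sub>R x + v *\<^sub>R y \<in> \<Omega>" using x y u Oconv by (auto intro: convexD)
    have "gau (u *\<^sub>R x + v *\<^sub>R y) \<le> max (gau x) (gau y)"
      unfolding v by (rule gau_convex_max) (use u in auto)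
    hence h1: "hh \<delta> (gau (u *\<^sub>R x + v *\<^sub>R y)) \<le> hh \<delta> (max (gau x) (gau y))" by (rule hh_mono[OF d])
    have "mono (hh \<delta>)" using hh_mono[OF d] by (auto intro: monoI)
    hence "ff \<delta> (u *\<^sub>R x + v *\<^sub>R y) \<le> max (ff \<delta> x) (ff \<delta> y)"
      unfolding ff_def using h1 by (simp add: max_of_mono)
    thus "u *\<^sub>R x + v *\<^sub>R y \<in> {x \<in> \<Omega>. ff \<delta> x < l}" using x y inO by auto
  qed
next
  show "\<exists>g \<epsilon>0. g \<in> borel_measurable borel \<and> (\<forall>x. 0 \<le> g x) \<and> integrable \<mu> g \<and> 0 < \<epsilon>0 \<and> \<epsilon>0 \<le> 1 \<and>
      (\<forall>x\<in>\<Omega>. \<forall>\<epsilon>\<in>{0<..<\<epsilon>0}. (ff \<delta> x - ff \<delta> (((1 - \<epsilon>) / (1 + \<epsilon>)) *\<^sub>R x)) / \<epsilon> \<le> g x)"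
  proof (intro exI[of _ "\<lambda>x. gau x / \<delta>"] exI[of _ 1] conjI ballI allI)
    show "(\<lambda>x. gau x / \<delta>) \<in> borel_measurable borel" by measurable
    fix x show "0 \<le> gau x / \<delta>" using d gau_nonneg[of x] by simp
  next
    have "integrable \<mu> (\<lambda>x. norm x / (r * \<delta>))" using intnorm by (intro integrable_divide) auto
    moreover have "(\<lambda>x. gau x / \<delta>) \<in> borel_measurable \<mu>" by (rule meas_mu) measurable
    moreover have "AE x in \<mu>. norm (gau x / \<delta>) \<le> norm (norm x / (r * \<delta>))"
    proof (intro AE_I2)
      fix x
      have "gau x / \<delta> \<le> (norm x / r) / \<delta>" using gau_le_norm[of x] d by (intro divide_right_mono) auto
      thus "norm (gau x / \<delta>) \<le> norm (norm x / (r * \<delta>))" using d rpos gau_nonneg[of x] by simp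
    qed
    ultimately show "integrable \<mu> (\<lambda>x. gau x / \<delta>)" by (rule Bochner_Integration.integrable_bound)
  next
    fix x \<epsilon> assume "\<epsilon> \<in> {0<..<(1::real)}"
    thus "(ff \<delta> x - ff \<delta> (((1 - \<epsilon>) / (1 + \<epsilon>)) *\<^sub>R x)) / \<epsilon> \<le> gau x / \<delta>"
      using quot_bound[OF d] by auto
  qed simp_all
next
  have "integrable \<mu> (\<lambda>x. 1::real)" by simp
  moreover have "(\<lambda>x. indicator \<Omega> x *\<^sub>R ff \<delta> x) \<in> borel_measurable \<mu>"
    using Oopen by (intro meas_mu) measurable
  moreover have "AE x in \<mu>. norm (indicator \<Omega> x *\<^sub>R ff \<delta> x) \<le> norm (1::real)"
    using hh_range unfolding ff_def by (auto split: split_indicator)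
  ultimately show "set_integrable \<mu> \<Omega> (ff \<delta>)" unfolding set_integrable_def by (rule Bochner_Integration.integrable_bound)
qed


definition Dl :: "real \<Rightarrow> real" where "Dl \<epsilon> = measure \<mu> (dilate K \<epsilon>) - measure \<mu> K"
definition AA :: "real \<Rightarrow> 'a set" where "AA \<delta> = {x. 1 < gau x \<and> gau x \<le> 1 + 2 * \<delta>}"
definition mm :: "real \<Rightarrow> real" where "mm \<delta> = (LINT x:\<Omega>|\<mu>. ff \<delta> x)"

lemma space_mu: "space \<mu> = UNIV" using sets_eq_imp_space_eq[OF S] by simp

lemma K_sets: "K \<in> sets \<mu>" using openK by (intro sets_mu) simp
lemma O_sets: "\<Omega> \<in> sets \<mu>" using Oopen by (intro sets_mu) simp
lemma dil_sets: "dilate K \<epsilon> \<in> sets \<mu>" using dilate_sets by (rule sets_mu)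
lemma AA_sets: "AA \<delta> \<in> sets \<mu>" unfolding AA_def by (intro sets_mu) measurable

lemma Dl_nonneg: "0 \<le> Dl \<epsilon>"
  using P.finite_measure_mono[OF K_sub_dilate dil_sets] unfolding Dl_def by simp

lemma meas_le_Dl:
  assumes "B \<in> sets \<mu>" "B \<subseteq> dilate K \<epsilon> - K"
  shows "measure \<mu> B \<le> Dl \<epsilon>"
proof -
  have "measure \<mu> B \<le> measure \<mu> (dilate K \<epsilon> - K)"
    using assms dil_sets K_sets by (intro P.finite_measure_mono) auto
  also have "\<dots> = Dl \<epsilon>" unfolding Dl_def using dil_sets K_sets K_sub_dilate by (rule P.finite_measure_Diff)
  finally show ?thesis .
qed

lemma AA_le: assumes "0 < \<delta>" "\<delta> < 1" shows "measure \<mu> (AA \<delta>) \<le> Dl \<delta>"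
proof (rule meas_le_Dl[OF AA_sets])
  show "AA \<delta> \<subseteq> dilate K \<delta> - K"
    using dilate_contains[OF assms] inK_iff unfolding AA_def by auto
qed

lemma Phi_bound:
  assumes d: "0 < \<delta>" "\<delta> < 1"
  shows "Phi (ff \<delta>) x \<le> ereal ((1 + 2 * \<delta>) / \<delta> * indicator (AA \<delta>) x)"
  unfolding Phi_def
proof (rule Limsup_bounded)
  have ev01: "eventually (\<lambda>\<epsilon>::real. 0 < \<epsilon> \<and> \<epsilon> < 1) (at_right 0)"
    unfolding eventually_at_right_field by (intro exI[of _ 1]) auto
  consider "gau x \<le> 1" | "1 + 2 * \<delta> < gau x" | "1 < gau x" "gau x \<le> 1 + 2 * \<delta>" by linarith
  thus "eventually (\<lambda>\<epsilon>. ereal ((ff \<delta> x - ff \<delta> (((1 - \<epsilon>) / (1 + \<epsilon>)) *\<^sub>R x)) / \<epsilon>)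
          \<le> ereal ((1 + 2 * \<delta>) / \<delta> * indicator (AA \<delta>) x)) (at_right 0)"
  proof cases
    case 1
    hence nA: "x \<notin> AA \<delta>" unfolding AA_def by auto
    have f0: "ff \<delta> x = 0" unfolding ff_def using 1 d by (intro hh_low) auto
    show ?thesis using ev01
    proof (rule eventually_mono)
      fix \<epsilon> :: real assume e: "0 < \<epsilon> \<and> \<epsilon> < 1"
      have "0 \<le> ff \<delta> (((1 - \<epsilon>) / (1 + \<epsilon>)) *\<^sub>R x)" unfolding ff_def by (rule hh_range)
      hence "(ff \<delta> x - ff \<delta> (((1 - \<epsilon>) / (1 + \<epsilon>)) *\<^sub>R x)) / \<epsilon> \<le> 0"
        unfolding f0 using e by (intro divide_nonpos_pos) auto
      thus "ereal ((ff \<delta> x - ff \<delta> (((1 - \<epsilon>) / (1 + \<epsilon>)) *\<^sub>R x)) / \<epsilon>)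
          \<le> ereal ((1 + 2 * \<delta>) / \<delta> * indicator (AA \<delta>) x)" using nA by simp
    qed
  next
    case 2
    hence nA: "x \<notin> AA \<delta>" unfolding AA_def by auto
    have f1: "ff \<delta> x = 1" unfolding ff_def using 2 d by (intro hh_high) auto
    have "((\<lambda>\<epsilon>::real. (1 - \<epsilon>) / (1 + \<epsilon>) * gau x) \<longlongrightarrow> (1 - 0) / (1 + 0) * gau x) (at_right 0)"
      by (intro tendsto_intros) auto
    hence "((\<lambda>\<epsilon>::real. (1 - \<epsilon>) / (1 + \<epsilon>) * gau x) \<longlongrightarrow> gau x) (at_right 0)" by simp
    from order_tendstoD(1)[OF this 2]
    have "eventually (\<lambda>\<epsilon>. 1 + 2 * \<delta> < (1 - \<epsilon>) / (1 + \<epsilon>) * gau x) (at_right 0)" .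
    with ev01 have "eventually (\<lambda>\<epsilon>. (0 < \<epsilon> \<and> \<epsilon> < 1) \<and> 1 + 2 * \<delta> < (1 - \<epsilon>) / (1 + \<epsilon>) * gau x) (at_right 0)"
      by (rule eventually_conj)
    thus ?thesis
    proof (rule eventually_mono)
      fix \<epsilon> :: real assume e: "(0 < \<epsilon> \<and> \<epsilon> < 1) \<and> 1 + 2 * \<delta> < (1 - \<epsilon>) / (1 + \<epsilon>) * gau x"
      have sp: "0 < (1 - \<epsilon>) / (1 + \<epsilon>)" using e by auto
      have "gau (((1 - \<epsilon>) / (1 + \<epsilon>)) *\<^sub>R x) = (1 - \<epsilon>) / (1 + \<epsilon>) * gau x"
        using gau_scale[of "(1 - \<epsilon>) / (1 + \<epsilon>)" x] abs_of_pos[OF sp] by (simp only:)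
      hence "ff \<delta> (((1 - \<epsilon>) / (1 + \<epsilon>)) *\<^sub>R x) = 1" unfolding ff_def using e d by (intro hh_high) auto
      thus "ereal ((ff \<delta> x - ff \<delta> (((1 - \<epsilon>) / (1 + \<epsilon>)) *\<^sub>R x)) / \<epsilon>)
          \<le> ereal ((1 + 2 * \<delta>) / \<delta> * indicator (AA \<delta>) x)" using nA f1 by simp
    qed
  next
    case 3
    hence A: "x \<in> AA \<delta>" unfolding AA_def by auto
    show ?thesis using ev01
    proof (rule eventually_mono)
      fix \<epsilon> :: real assume e: "0 < \<epsilon> \<and> \<epsilon> < 1"
      have "(ff \<delta> x - ff \<delta> (((1 - \<epsilon>) / (1 + \<epsilon>)) *\<^sub>R x)) / \<epsilon> \<le> gau x / \<delta>"
        using quot_bound[of \<delta> \<epsilon> x] d e by auto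
      also have "gau x / \<delta> \<le> (1 + 2 * \<delta>) / \<delta>" using 3 d by (intro divide_right_mono) auto
      finally show "ereal ((ff \<delta> x - ff \<delta> (((1 - \<epsilon>) / (1 + \<epsilon>)) *\<^sub>R x)) / \<epsilon>)
          \<le> ereal ((1 + 2 * \<delta>) / \<delta> * indicator (AA \<delta>) x)" using A by simp
    qed
  qed
qed

lemma Phi_int:
  assumes d: "0 < \<delta>" "\<delta> < 1"
  shows "(\<integral>\<^sup>+x\<in>\<Omega>. e2ennreal (Phi (ff \<delta>) x) \<partial>\<mu>) \<le> ennreal ((1 + 2 * \<delta>) / \<delta> * Dl \<delta>)"
proof -
  define c where "c = (1 + 2 * \<delta>) / \<delta>"
  have c: "0 \<le> c" using d by (simp add: c_def)
  have "(\<integral>\<^sup>+x\<in>\<Omega>. e2ennreal (Phi (ff \<delta>) x) \<partial>\<mu>) \<le> (\<integral>\<^sup>+x. ennreal c * indicator (AA \<delta>) x \<partial>\<mu>)"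
  proof (rule nn_integral_mono)
    fix x
    have "e2ennreal (Phi (ff \<delta>) x) * indicator \<Omega> x \<le> e2ennreal (Phi (ff \<delta>) x)"
      by (auto split: split_indicator)
    also have "\<dots> \<le> e2ennreal (ereal (c * indicator (AA \<delta>) x))"
      unfolding c_def by (rule e2ennreal_mono[OF Phi_bound[OF d]])
    also have "\<dots> = ennreal c * indicator (AA \<delta>) x" by (auto split: split_indicator)
    finally show "e2ennreal (Phi (ff \<delta>) x) * indicator \<Omega> x \<le> ennreal c * indicator (AA \<delta>) x" .
  qed
  also have "\<dots> = ennreal c * emeasure \<mu> (AA \<delta>)" using AA_sets by (rule nn_integral_cmult_indicator)
  also have "\<dots> = ennreal (c * measure \<mu> (AA \<delta>))" using c by (simp add: P.emeasure_eq_measure ennreal_mult)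
  also have "\<dots> \<le> ennreal (c * Dl \<delta>)" using c AA_le[OF d] by (intro ennreal_leI mult_left_mono)
  finally show ?thesis unfolding c_def .
qed

lemma Ent_lower:
  assumes d: "0 < \<delta>" "\<delta> < 1"
  shows "ereal (- Dl \<delta> - xlogx (mm \<delta>)) \<le> Ent \<mu> \<Omega> (ff \<delta>)"
proof -
  have r01: "0 \<le> ff \<delta> x" "ff \<delta> x \<le> 1" for x unfolding ff_def using hh_range by auto
  have P1: "(\<integral>\<^sup>+x\<in>\<Omega>. ennreal (xlogx (ff \<delta> x)) \<partial>\<mu>) = 0"
  proof -
    have "\<And>x. ennreal (xlogx (ff \<delta> x)) = 0" using r01 xlogx_nonpos by (intro ennreal_neg) auto
    thus ?thesis by simp
  qed
  define P2 where "P2 = (\<integral>\<^sup>+x\<in>\<Omega>. ennreal (- xlogx (ff \<delta> x)) \<partial>\<mu>)"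
  have "P2 \<le> (\<integral>\<^sup>+x. indicator (AA \<delta>) x \<partial>\<mu>)"
    unfolding P2_def
  proof (rule nn_integral_mono)
    fix x
    have "ennreal (- xlogx (ff \<delta> x)) * indicator \<Omega> x \<le> ennreal (- xlogx (ff \<delta> x))"
      by (auto split: split_indicator)
    also have "\<dots> \<le> indicator (AA \<delta>) x"
    proof (cases "x \<in> AA \<delta>")
      case True
      thus ?thesis using neg_xlogx_le1[OF r01] by (simp add: ennreal_leI[of _ 1, simplified])
    next
      case False
      hence "gau x \<le> 1 \<or> 1 + 2 * \<delta> < gau x" unfolding AA_def by auto
      hence "ff \<delta> x = 0 \<or> ff \<delta> x = 1" unfolding ff_def using d hh_low hh_high by force
      hence "xlogx (ff \<delta> x) = 0" using xlogx_01 by auto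
      thus ?thesis by simp
    qed
    finally show "ennreal (- xlogx (ff \<delta> x)) * indicator \<Omega> x \<le> indicator (AA \<delta>) x" .
  qed
  also have "\<dots> = emeasure \<mu> (AA \<delta>)" using AA_sets by simp
  also have "\<dots> = ennreal (measure \<mu> (AA \<delta>))" by (simp add: P.emeasure_eq_measure)
  also have "\<dots> \<le> ennreal (Dl \<delta>)" using AA_le[OF d] by (rule ennreal_leI)
  finally have P2le: "P2 \<le> ennreal (Dl \<delta>)" .
  hence P2fin: "P2 < top" using top.not_eq_extremum by (auto intro: le_less_trans)
  define b where "b = enn2real P2"
  have P2b: "P2 = ennreal b" unfolding b_def using P2fin by simp
  have b0: "0 \<le> b" unfolding b_def by simp
  have bD: "b \<le> Dl \<delta>" unfolding b_def using enn2real_mono[OF P2le] Dl_nonneg by simp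
  have "Ent \<mu> \<Omega> (ff \<delta>) = ereal (- b - xlogx (mm \<delta>))"
    unfolding Ent_def P1 P2_def[symmetric] P2b mm_def using b0 by (simp add: zero_ennreal.rep_eq)
  thus ?thesis using bD by simp
qed

lemma key:
  assumes d: "0 < \<delta>" "\<delta> < 1"
    and LSI: "\<forall>f \<in> QC1 \<Omega> \<mu>.
           Ent \<mu> \<Omega> f \<le> ereal (1 / \<kappa>) * enn2ereal (\<integral>\<^sup>+x\<in>\<Omega>. e2ennreal (Phi f x) \<partial>\<mu>)"
  shows "- \<kappa> * xlogx (mm \<delta>) \<le> \<kappa> * Dl \<delta> + (1 + 2 * \<delta>) / \<delta> * Dl \<delta>"
proof -
  define c where "c = (1 + 2 * \<delta>) / \<delta> * Dl \<delta>"
  have c: "0 \<le> c" using d Dl_nonneg by (simp add: c_def)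
  define I where "I = (\<integral>\<^sup>+x\<in>\<Omega>. e2ennreal (Phi (ff \<delta>) x) \<partial>\<mu>)"
  have Ile: "I \<le> ennreal c" unfolding I_def c_def by (rule Phi_int[OF d])
  hence Ifin: "I < top" using top.not_eq_extremum by (auto intro: le_less_trans)
  define i where "i = enn2real I"
  have Ii: "I = ennreal i" unfolding i_def using Ifin by simp
  have i0: "0 \<le> i" unfolding i_def by simp
  have ic: "i \<le> c" unfolding i_def using enn2real_mono[OF Ile] c by simp
  have "ereal (- Dl \<delta> - xlogx (mm \<delta>)) \<le> Ent \<mu> \<Omega> (ff \<delta>)" by (rule Ent_lower[OF d])
  also have "\<dots> \<le> ereal (1 / \<kappa>) * enn2ereal I" unfolding I_def using LSI ff_QC1[OF d(1)] by blast
  also have "\<dots> = ereal (i / \<kappa>)" unfolding Ii using i0 by simp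
  finally have "- Dl \<delta> - xlogx (mm \<delta>) \<le> i / \<kappa>" by simp
  hence "\<kappa> * (- Dl \<delta> - xlogx (mm \<delta>)) \<le> \<kappa> * (i / \<kappa>)" using kpos by (intro mult_left_mono) auto
  also have "\<kappa> * (i / \<kappa>) = i" using kpos by simp
  finally have "\<kappa> * (- Dl \<delta> - xlogx (mm \<delta>)) \<le> c" using ic by linarith
  thus ?thesis unfolding c_def by (simp add: algebra_simps)
qed

lemma set_int_ind:
  assumes "B \<in> sets \<mu>"
  shows "set_integrable \<mu> \<Omega> (indicator B :: 'a \<Rightarrow> real)" "(LINT x:\<Omega>|\<mu>. indicator B x) = measure \<mu> (\<Omega> \<inter> B)"
proof -
  have eq: "(\<lambda>x. indicator \<Omega> x *\<^sub>R (indicator B x :: real)) = indicator (\<Omega> \<inter> B)"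
    by (auto split: split_indicator)
  have s: "\<Omega> \<inter> B \<in> sets \<mu>" using O_sets assms by auto
  show "set_integrable \<mu> \<Omega> (indicator B :: 'a \<Rightarrow> real)" unfolding set_integrable_def eq
    using s by (intro integrable_real_indicator) (auto simp: P.emeasure_eq_measure)
  show "(LINT x:\<Omega>|\<mu>. indicator B x) = measure \<mu> (\<Omega> \<inter> B)"
    unfolding set_lebesgue_integral_def eq by (simp add: space_mu)
qed

lemma mm_upper: assumes d: "0 < \<delta>" shows "mm \<delta> \<le> 1 - measure \<mu> K"
proof -
  have "mm \<delta> \<le> (LINT x:\<Omega>|\<mu>. indicator (UNIV - K) x)"
    unfolding mm_def
  proof (rule set_integral_mono)
    show "set_integrable \<mu> \<Omega> (ff \<delta>)" using ff_QC1[OF d] unfolding QC1_def by auto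
    show "set_integrable \<mu> \<Omega> (indicator (UNIV - K) :: 'a \<Rightarrow> real)" using K_sets space_mu
      by (intro set_int_ind) (metis sets.compl_sets)
    fix x show "ff \<delta> x \<le> indicator (UNIV - K) x"
    proof (cases "x \<in> K")
      case True thus ?thesis unfolding ff_def using inK_iff d by (simp add: hh_low)
    next
      case False thus ?thesis using hh_range unfolding ff_def by simp
    qed
  qed
  also have "\<dots> = measure \<mu> (\<Omega> \<inter> (UNIV - K))" using K_sets space_mu
    by (intro set_int_ind) (metis sets.compl_sets)
  also have "\<Omega> \<inter> (UNIV - K) = \<Omega> - K" by auto
  also have "measure \<mu> (\<Omega> - K) = 1 - measure \<mu> K"
    using P.finite_measure_Diff[OF O_sets K_sets KO] O1 by simp
  finally show ?thesis .
qed

lemma mm_lower: assumes d: "0 < \<delta>" "\<delta> < 1" shows "1 - measure \<mu> K - Dl \<delta> \<le> mm \<delta>"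
proof -
  define B where "B = {x. 1 + 2 * \<delta> \<le> gau x}"
  have Bs: "B \<in> sets \<mu>" unfolding B_def by (intro sets_mu) measurable
  have "(LINT x:\<Omega>|\<mu>. indicator B x) \<le> mm \<delta>"
    unfolding mm_def
  proof (rule set_integral_mono)
    show "set_integrable \<mu> \<Omega> (ff \<delta>)" using ff_QC1[OF d(1)] unfolding QC1_def by auto
    show "set_integrable \<mu> \<Omega> (indicator B :: 'a \<Rightarrow> real)" using Bs by (rule set_int_ind)
    fix x show "indicator B x \<le> ff \<delta> x"
    proof (cases "x \<in> B")
      case True thus ?thesis unfolding ff_def B_def using d by (simp add: hh_high)
    next
      case False thus ?thesis using hh_range unfolding ff_def by simp
    qed
  qed
  moreover have "(LINT x:\<Omega>|\<mu>. indicator B x) = measure \<mu> (\<Omega> \<inter> B)" using Bs by (rule set_int_ind)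
  moreover have "measure \<mu> (\<Omega> - B) = 1 - measure \<mu> (\<Omega> \<inter> B)"
    using P.finite_measure_Diff'[OF O_sets Bs] O1 by simp
  moreover have "measure \<mu> (\<Omega> - B) \<le> measure \<mu> (dilate K \<delta>)"
  proof (rule P.finite_measure_mono[OF _ dil_sets])
    show "\<Omega> - B \<subseteq> dilate K \<delta>"
    proof
      fix x assume "x \<in> \<Omega> - B"
      hence "gau x \<le> 1 + 2 * \<delta>" unfolding B_def by auto
      thus "x \<in> dilate K \<delta>" by (rule dilate_contains[OF d])
    qed
  qed
  ultimately show ?thesis unfolding Dl_def by linarith
qed


lemma final:
  assumes LSI: "\<forall>f \<in> QC1 \<Omega> \<mu>.
           Ent \<mu> \<Omega> f \<le> ereal (1 / \<kappa>) * enn2ereal (\<integral>\<^sup>+x\<in>\<Omega>. e2ennreal (Phi f x) \<partial>\<mu>)"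
  shows "ereal (- \<kappa> * xlogx (1 - measure \<mu> K)) \<le> mu_star \<mu> K"
proof -
  define p where "p = measure \<mu> K"
  define L where "L = - \<kappa> * xlogx (1 - p)"
  have ms: "mu_star \<mu> K = Liminf (at_right 0) (\<lambda>\<epsilon>. ereal (Dl \<epsilon> / \<epsilon>))"
    unfolding mu_star_def Dl_def ..
  have ev01: "eventually (\<lambda>\<epsilon>::real. 0 < \<epsilon> \<and> \<epsilon> < 1) (at_right 0)"
    unfolding eventually_at_right_field by (intro exI[of _ 1]) auto
  have "ereal L \<le> Liminf (at_right 0) (\<lambda>\<epsilon>. ereal (Dl \<epsilon> / \<epsilon>))"
  proof (rule le_Liminf_iff[THEN iffD2], intro allI impI)
    fix y assume yL: "y < ereal L"
    show "eventually (\<lambda>\<epsilon>. y < ereal (Dl \<epsilon> / \<epsilon>)) (at_right 0)"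
    proof (cases "y < 0")
      case True
      show ?thesis using ev01
      proof (rule eventually_mono)
        fix \<epsilon> :: real assume "0 < \<epsilon> \<and> \<epsilon> < 1"
        hence "0 \<le> Dl \<epsilon> / \<epsilon>" using Dl_nonneg by simp
        thus "y < ereal (Dl \<epsilon> / \<epsilon>)" using True by (simp add: less_le_trans)
      qed
    next
      case False
      then obtain y' where y': "y = ereal y'" using yL by (cases y) auto
      have y0: "0 \<le> y'" using False y' by simp
      have yL': "y' < L" using yL y' by simp
      have p01: "0 \<le> p" "p \<le> 1" unfolding p_def by (auto simp: P.prob_le_1)
      define s0 where "s0 = 1 - p"
      have s0pos: "0 < s0"
      proof (rule ccontr)
        assume "\<not> 0 < s0"
        hence "s0 = 0" using p01 by (simp add: s0_def)
        hence "L = 0" unfolding L_def s0_def[symmetric] by (simp add: xlogx_01)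
        thus False using yL' y0 by simp
      qed
      define \<gamma> where "\<gamma> = (L - y') / 2"
      have \<gamma>: "0 < \<gamma>" using yL' by (simp add: \<gamma>_def)
      have "((\<lambda>m. m * ln m) \<longlongrightarrow> s0 * ln s0) (at s0)"
        using s0pos by (intro tendsto_intros) auto
      from LIM_D[OF this, of "\<gamma> / \<kappa>"] obtain \<eta>1 where \<eta>1: "\<eta>1 > 0"
        "\<And>m. m \<noteq> s0 \<and> norm (m - s0) < \<eta>1 \<Longrightarrow> norm (m * ln m - s0 * ln s0) < \<gamma> / \<kappa>"
        using \<gamma> kpos by auto
      define \<eta> where "\<eta> = min \<eta>1 s0"
      have \<eta>: "0 < \<eta>" using \<eta>1 s0pos by (simp add: \<eta>_def)
      have near: "L - \<gamma> < - \<kappa> * xlogx m" if m: "\<bar>m - s0\<bar> < \<eta>" for m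
      proof -
        have mpos: "0 < m" using m by (auto simp: \<eta>_def)
        have "\<bar>xlogx m - xlogx s0\<bar> < \<gamma> / \<kappa>"
        proof (cases "m = s0")
          case True thus ?thesis using \<gamma> kpos by simp
        next
          case False
          thus ?thesis using \<eta>1(2)[of m] m mpos s0pos by (auto simp: xlogx_def \<eta>_def)
        qed
        hence "\<kappa> * \<bar>xlogx m - xlogx s0\<bar> < \<kappa> * (\<gamma> / \<kappa>)" using kpos by (intro mult_strict_left_mono) auto
        hence "\<kappa> * \<bar>xlogx m - xlogx s0\<bar> < \<gamma>" using kpos by simp
        moreover have "\<kappa> * (xlogx m - xlogx s0) \<le> \<kappa> * \<bar>xlogx m - xlogx s0\<bar>"
          using kpos by (intro mult_left_mono) auto
        ultimately have "\<kappa> * (xlogx m - xlogx s0) < \<gamma>" by linarith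
        thus ?thesis unfolding L_def s0_def[symmetric] by (simp add: algebra_simps)
      qed
      define b where "b = min 1 (min (\<eta> / (y' + 1)) (\<gamma> / ((2 + \<kappa>) * (y' + 1))))"
      have b: "0 < b" unfolding b_def using \<eta> \<gamma> y0 kpos by (auto intro!: divide_pos_pos mult_pos_pos)
      show ?thesis unfolding eventually_at_right_field
      proof (intro exI[of _ b] conjI allI impI)
        show "0 < b" by (rule b)
        fix \<epsilon> :: real assume e0: "0 < \<epsilon>" and eb: "\<epsilon> < b"
        have e1: "\<epsilon> < 1" using eb by (simp add: b_def)
        have ea: "\<epsilon> < \<eta> / (y' + 1)" using eb by (simp add: b_def)
        have eg: "\<epsilon> < \<gamma> / ((2 + \<kappa>) * (y' + 1))" using eb by (simp add: b_def)
        show "y < ereal (Dl \<epsilon> / \<epsilon>)"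
        proof (rule ccontr)
          assume "\<not> y < ereal (Dl \<epsilon> / \<epsilon>)"
          hence Qy: "Dl \<epsilon> / \<epsilon> \<le> y'" using y' by simp
          define Q where "Q = Dl \<epsilon> / \<epsilon>"
          have DQ: "Dl \<epsilon> = \<epsilon> * Q" using e0 by (simp add: Q_def)
          have Q0: "0 \<le> Q" using Dl_nonneg e0 by (simp add: Q_def)
          have "\<epsilon> * (y' + 1) < \<eta>" using ea y0 by (simp add: pos_less_divide_eq)
          hence "\<epsilon> * y' < \<eta>" using e0 by (simp add: algebra_simps)
          moreover have "\<epsilon> * Q \<le> \<epsilon> * y'" using Qy e0 by (simp add: Q_def[symmetric])
          ultimately have Dsmall: "Dl \<epsilon> < \<eta>" using DQ by linarith
          have m1: "1 - p - Dl \<epsilon> \<le> mm \<epsilon>" using mm_lower[OF e0 e1] by (simp add: p_def)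
          have m2: "mm \<epsilon> \<le> 1 - p" using mm_upper[OF e0] by (simp add: p_def)
          have "\<bar>mm \<epsilon> - s0\<bar> < \<eta>" using m1 m2 Dsmall Dl_nonneg[of \<epsilon>] by (simp add: s0_def abs_if)
          hence lo: "L - \<gamma> < - \<kappa> * xlogx (mm \<epsilon>)" by (rule near)
          have hi: "- \<kappa> * xlogx (mm \<epsilon>) \<le> \<kappa> * Dl \<epsilon> + (1 + 2 * \<epsilon>) / \<epsilon> * Dl \<epsilon>"
            by (rule key[OF e0 e1 LSI])
          have "\<kappa> * Dl \<epsilon> + (1 + 2 * \<epsilon>) / \<epsilon> * Dl \<epsilon> = (1 + (2 + \<kappa>) * \<epsilon>) * Q"
            unfolding DQ using e0 by (simp add: field_simps)
          also have "\<dots> \<le> (1 + (2 + \<kappa>) * \<epsilon>) * y'"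
            using Qy e0 kpos by (intro mult_left_mono) (auto simp: Q_def)
          also have "\<dots> = y' + (2 + \<kappa>) * \<epsilon> * y'" by (simp add: algebra_simps)
          also have "(2 + \<kappa>) * \<epsilon> * y' < \<gamma>"
          proof -
            have "(2 + \<kappa>) * (y' + 1) > 0" using kpos y0 by simp
            hence "\<epsilon> * ((2 + \<kappa>) * (y' + 1)) < \<gamma>" using eg by (simp add: pos_less_divide_eq)
            moreover have "(2 + \<kappa>) * \<epsilon> * y' \<le> \<epsilon> * ((2 + \<kappa>) * (y' + 1))"
              using e0 kpos by (simp add: algebra_simps)
            ultimately show ?thesis by linarith
          qed
          finally have "- \<kappa> * xlogx (mm \<epsilon>) < y' + \<gamma>" using hi by linarith
          with lo have "L - \<gamma> < y' + \<gamma>" by linarith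
          thus False unfolding \<gamma>_def by (simp add: field_simps)
        qed
      qed
    qed
  qed
  thus ?thesis unfolding ms L_def p_def .
qed

end

theorem theoremt:
  fixes \<mu> :: "'a::euclidean_space measure" and \<Omega> :: "'a set" and \<kappa> :: real
  assumes "prob_space \<mu>" and "sets \<mu> = sets borel"
    and "sym_convex_domain \<Omega>" and "measure \<mu> \<Omega> = 1"
    and "integrable \<mu> norm"
    and "\<kappa> > 0"
    and "\<forall>f \<in> QC1 \<Omega> \<mu>.
           Ent \<mu> \<Omega> f \<le> ereal (1 / \<kappa>) * enn2ereal (\<integral>\<^sup>+x\<in>\<Omega>. e2ennreal (Phi f x) \<partial>\<mu>)"
  shows "dilation_ineq \<mu> \<Omega> \<kappa>"
proof -
  have O: "open \<Omega>" "convex \<Omega>" using assms(3) unfolding sym_convex_domain_def by auto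
  show ?thesis unfolding dilation_ineq_def
  proof
    fix K assume "K \<in> Ks \<Omega>"
    hence K: "K \<noteq> {}" "K \<subseteq> \<Omega>" "open K" "convex K" "uminus ` K = K" unfolding Ks_def by auto
    have sK: "- x \<in> K" if "x \<in> K" for x
    proof -
      have "- x \<in> uminus ` K" using that by (rule imageI)
      thus ?thesis using K(5) by simp
    qed
    obtain a where a: "a \<in> K" using K(1) by auto
    have "(1/2::real) *\<^sub>R a + (1/2::real) *\<^sub>R (- a) \<in> K"
      by (rule convexD[OF K(4) a sK[OF a]]) auto
    hence "0 \<in> K" by simp
    then obtain r where r: "r > 0" "ball 0 r \<subseteq> K" using K(3) open_contains_ball by blast
    have "setting K r \<mu> \<Omega> \<kappa>"
      unfolding setting_def setting_axioms_def symK_def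
      using K sK r O assms(1,2,4,5,6) by blast
    then interpret setting K r \<mu> \<Omega> \<kappa> .
    show "ereal (- \<kappa> * xlogx (1 - measure \<mu> K)) \<le> mu_star \<mu> K"
      by (rule final[OF assms(7)])
  qed
qed

end
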